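(* Let $n\geq 4$ and let $T_n$ be the group with generators $z,t_1,\dots,t_{n-1}$ and relations $t_i^2=1$ ($1\le i\le n-1$), $(t_jt_{j+1})^3=1$ ($1\le j\le n-2$), $(t_kt_l)^2=z$ (for $k\le l-2$), $z^2=1$ and $zt_i=t_iz$ ($1\le i\le n-1$). Let $l\in\mathbb{N}$, let $\sigma=s_{i_1}s_{i_2}\cdots s_{i_l}\in\mathbb{S}_n$ with $i_1,\dots,i_l\in\{1,\dots,n-1\}$, and let $i,j\in\{1,\dots,n\}$ with $i\neq j$. Then \[ \sigma\triangleright[i\;j]=[\sigma(i)\;\sigma(j)]\,z^l . \]
   Context: $\mathbb{S}_n$ is the symmetric group, $s_k=(k\;k+1)$ denotes the adjacent transposition, and $p:T_n\to\mathbb{S}_n$ is the surjective homomorphism with $p(t_k)=s_k$, $p(z)=1$; its kernel is $\langle z\rangle$, which is central of order $2$. For $\sigma\in\mathbb{S}_n$ and $t\in T_n$, define $\sigma\triangleright t=\bar\sigma t\bar\sigma^{-1}$, where $\bar\sigma\in T_n$ is any element with $p(\bar\sigma)=\sigma$ (independent of the choice since $z$ is central). For $1\le i,j\le n$, $i\ne j$, the elements $[i\;j]\in T_n$ are defined inductively by $[i\;i+1]=t_i$; $[i\;j]=(s_i\triangleright[i+1\;j])\,z$ for $i+1<j$; and $[j\;i]=[i\;j]\,z$ for $i<j$. *)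

theory Defs
  imports "HOL-Algebra.Group" "HOL-Combinatorics.Transposition"
begin

text \<open>Since every generator is an
involution (t_i^2 = 1, z^2 = 1), the group T_n is the monoid presented by the
same generators and relations; we construct it as the quotient of the free monoid
(words over the generators) by the congruence generated by the relations.\<close>

datatype gen = Z | T nat

definition gens :: "nat \<Rightarrow> gen set" where
  "gens n = insert Z {T k | k. 1 \<le> k \<and> k \<le> n - 1}"

inductive Trel :: "nat \<Rightarrow> gen list \<Rightarrow> gen list \<Rightarrow> bool" for n where
  inv_t: "1 \<le> i \<Longrightarrow> i \<le> n - 1 \<Longrightarrow> Trel n [T i, T i] []"
| braid: "1 \<le> j \<Longrightarrow> j \<le> n - 2 \<Longrightarrow>
      Trel n [T j, T (Suc j), T j, T (Suc j), T j, T (Suc j)] []"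
| far: "1 \<le> k \<Longrightarrow> k + 2 \<le> l \<Longrightarrow> l \<le> n - 1 \<Longrightarrow>
      Trel n [T k, T l, T k, T l] [Z]"
| inv_z: "Trel n [Z, Z] []"
| central: "1 \<le> i \<Longrightarrow> i \<le> n - 1 \<Longrightarrow> Trel n [Z, T i] [T i, Z]"

inductive Teqv :: "nat \<Rightarrow> gen list \<Rightarrow> gen list \<Rightarrow> bool" for n where
  refl: "Teqv n w w"
| sym: "Teqv n u v \<Longrightarrow> Teqv n v u"
| trans: "Teqv n u v \<Longrightarrow> Teqv n v w \<Longrightarrow> Teqv n u w"
| step: "Trel n u v \<Longrightarrow> Teqv n (a @ u @ b) (a @ v @ b)"

definition Tcls :: "nat \<Rightarrow> gen list \<Rightarrow> gen list set" where
  "Tcls n w = {v. Teqv n w v}"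

definition Tgrp :: "nat \<Rightarrow> gen list set monoid" where
  "Tgrp n = \<lparr> carrier = {Tcls n w | w. set w \<subseteq> gens n},
              mult = (\<lambda>A B. Tcls n ((SOME a. a \<in> A) @ (SOME b. b \<in> B))),
              one = Tcls n [] \<rparr>"

definition zT :: "nat \<Rightarrow> gen list set" where
  "zT n = Tcls n [Z]"

definition tT :: "nat \<Rightarrow> nat \<Rightarrow> gen list set" where
  "tT n k = Tcls n [T k]"

text \<open>Permutations of {1..n} as functions nat => nat; s_k = (k k+1).
Products act on the left: (\<sigma> \<tau>)(x) = \<sigma>(\<tau>(x)).\<close>

definition s_perm :: "nat \<Rightarrow> nat \<Rightarrow> nat" where
  "s_perm k = transpose k (Suc k)"

definition sword :: "nat list \<Rightarrow> nat \<Rightarrow> nat" where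
  "sword ks = foldr (\<lambda>k f. s_perm k \<circ> f) ks id"

definition p_gen :: "gen \<Rightarrow> nat \<Rightarrow> nat" where
  "p_gen g = (case g of Z \<Rightarrow> id | T k \<Rightarrow> s_perm k)"

definition p_word :: "gen list \<Rightarrow> nat \<Rightarrow> nat" where
  "p_word w = foldr (\<lambda>g f. p_gen g \<circ> f) w id"

definition pT :: "gen list set \<Rightarrow> nat \<Rightarrow> nat" where
  "pT A = p_word (SOME w. w \<in> A)"

definition act :: "nat \<Rightarrow> (nat \<Rightarrow> nat) \<Rightarrow> gen list set \<Rightarrow> gen list set" where
  "act n \<sigma> t = (let b = (SOME b. b \<in> carrier (Tgrp n) \<and> pT b = \<sigma>)
                in b \<otimes>\<^bsub>Tgrp n\<^esub> t \<otimes>\<^bsub>Tgrp n\<^esub> inv\<^bsub>Tgrp n\<^esub> b)"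

text \<open>brk n i d = [i, i+d+1]:  [i i+1] = t_i,  [i j] = (s_i \<triangleright> [i+1 j]) z for i+1<j.\<close>
fun brk :: "nat \<Rightarrow> nat \<Rightarrow> nat \<Rightarrow> gen list set" where
  "brk n i 0 = tT n i"
| "brk n i (Suc d) = act n (s_perm i) (brk n (Suc i) d) \<otimes>\<^bsub>Tgrp n\<^esub> zT n"

definition br :: "nat \<Rightarrow> nat \<Rightarrow> nat \<Rightarrow> gen list set" where
  "br n i j = (if i < j then brk n i (j - i - 1)
               else if j < i then brk n j (i - j - 1) \<otimes>\<^bsub>Tgrp n\<^esub> zT n
               else undefined)"

end

theory Submission
  imports Defs "HOL-Combinatorics.Permutations"
begin

lemma Teqv_app_right: "Teqv n u v \<Longrightarrow> Teqv n (u @ w) (v @ w)"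
proof (induction rule: Teqv.induct)
  case (step u v a b)
  then show ?case using Teqv.step[OF step(1), of a "b @ w"] by simp
qed (auto intro: Teqv.intros)

lemma Teqv_app_left: "Teqv n u v \<Longrightarrow> Teqv n (w @ u) (w @ v)"
proof (induction rule: Teqv.induct)
  case (step u v a b)
  then show ?case using Teqv.step[OF step(1), of "w @ a" b] by simp
qed (auto intro: Teqv.intros)

lemma Teqv_ctx: "Teqv n u v \<Longrightarrow> Teqv n (a @ u @ b) (a @ v @ b)"
  by (intro Teqv_app_left Teqv_app_right)

lemma Teqv_ctxI: "Teqv n u v \<Longrightarrow> x = a @ u @ b \<Longrightarrow> y = a @ v @ b \<Longrightarrow> Teqv n x y"
  using Teqv_ctx by blast

lemma Teqv_cons: "Teqv n u v \<Longrightarrow> Teqv n (g # u) (g # v)"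
  using Teqv_app_left[of n u v "[g]"] by simp

definition gk :: "nat \<Rightarrow> nat \<Rightarrow> bool" where "gk n k \<longleftrightarrow> 1 \<le> k \<and> k \<le> n - 1"

lemmas [trans] = Teqv.trans

lemma Teqv_sym: "Teqv n u v \<Longrightarrow> Teqv n v u" by (rule Teqv.sym)

lemma rel_eqv: "Trel n u v \<Longrightarrow> Teqv n u v"
  using Teqv.step[of n u v "[]" "[]"] by simp

lemma cancelT: "gk n k \<Longrightarrow> Teqv n (a @ [T k, T k] @ b) (a @ b)"
  using Teqv.step[OF Trel.inv_t[of k n], of a b] by (simp add: gk_def)

lemma cancelT': "gk n k \<Longrightarrow> Teqv n (a @ T k # T k # b) (a @ b)"
  using cancelT by simp

lemma cancelZ: "Teqv n (a @ [Z, Z] @ b) (a @ b)"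
  using Teqv.step[OF Trel.inv_z[of n], of a b] by simp

lemma cancelZ': "Teqv n (a @ Z # Z # b) (a @ b)"
  using cancelZ by simp

lemma zT_comm: "gk n k \<Longrightarrow> Teqv n (a @ Z # T k # b) (a @ T k # Z # b)"
  using Teqv.step[OF Trel.central[of k n], of a b] by (simp add: gk_def)

lemma gens_iff: "g \<in> gens n \<longleftrightarrow> g = Z \<or> (\<exists>k. g = T k \<and> gk n k)"
  by (auto simp: gens_def gk_def)

lemma zcomm: "set w \<subseteq> gens n \<Longrightarrow> Teqv n (a @ Z # w @ b) (a @ w @ Z # b)"
proof (induction w arbitrary: a)
  case Nil
  then show ?case by (simp add: Teqv.refl)
next
  case (Cons g w)
  have g: "g = Z \<or> (\<exists>k. g = T k \<and> gk n k)" using Cons(2) gens_iff by auto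
  have 1: "Teqv n (a @ Z # g # w @ b) (a @ g # Z # w @ b)"
    using g zT_comm[of n _ a "w @ b"] by (auto simp: Teqv.refl)
  have 2: "Teqv n ((a @ [g]) @ Z # w @ b) ((a @ [g]) @ w @ Z # b)"
    using Cons.IH[of "a @ [g]"] Cons(2) by simp
  show ?case using Teqv.trans[OF 1] 2 by simp
qed

lemma zcomm_rep: "set w \<subseteq> gens n \<Longrightarrow> Teqv n (a @ replicate m Z @ w @ b) (a @ w @ replicate m Z @ b)"
proof (induction m arbitrary: a)
  case 0
  then show ?case by (simp add: Teqv.refl)
next
  case (Suc m)
  have 1: "Teqv n ((a @ [Z]) @ replicate m Z @ w @ b) ((a @ [Z]) @ w @ replicate m Z @ b)"
    using Suc by blast
  have 2: "Teqv n (a @ Z # w @ replicate m Z @ b) (a @ w @ Z # replicate m Z @ b)"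
    using zcomm[OF Suc(2)] by blast
  show ?case using Teqv.trans[OF 1] 2 by (simp add: replicate_app_Cons_same)
qed

lemma farI: "gk n k \<Longrightarrow> gk n l \<Longrightarrow> k + 2 \<le> l \<Longrightarrow> Teqv n [T k, T l, T k, T l] [Z]"
  by (rule rel_eqv, rule Trel.far) (auto simp: gk_def)

lemma anti1: assumes "gk n k" "gk n l" "k + 2 \<le> l"
  shows "Teqv n [T k, T l] [Z, T l, T k]"
proof -
  have "Teqv n [Z, T l, T k] ([T k,T l,T k,T l] @ [T l, T k])"
    using Teqv_ctx[OF Teqv.sym[OF farI[OF assms]], of "[]" "[T l,T k]"] by simp
  also have "Teqv n \<dots> [T k, T l, T k, T k]" using cancelT[OF assms(2), of "[T k,T l,T k]" "[T k]"] by simp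
  also have "Teqv n \<dots> [T k, T l]" using cancelT[OF assms(1), of "[T k,T l]" "[]"] by simp
  finally show ?thesis by (rule Teqv.sym)
qed

lemma anti2: assumes "gk n k" "gk n l" "k + 2 \<le> l"
  shows "Teqv n [T l, T k] [Z, T k, T l]"
proof -
  have f: "Teqv n [T l, T k, T l, T k] [Z]"
  proof -
    have "Teqv n [T l, T k, T l, T k] ([T l] @ [T k,T l,T k,T l] @ [T l])"
      using cancelT[OF assms(2), of "[T l, T k, T l, T k]" "[]"] by (simp add: Teqv.sym)
    also have "Teqv n \<dots> ([T l] @ [Z] @ [T l])" by (rule Teqv_ctx[OF farI[OF assms]])
    also have "Teqv n \<dots> [Z, T l, T l]" using zT_comm[OF assms(2), of "[]" "[T l]"] by (simp add: Teqv.sym)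
    also have "Teqv n \<dots> [Z]" using cancelT[OF assms(2), of "[Z]" "[]"] by simp
    finally show ?thesis .
  qed
  have "Teqv n [Z, T k, T l] ([T l,T k,T l,T k] @ [T k, T l])"
    using Teqv_ctx[OF Teqv.sym[OF f], of "[]" "[T k,T l]"] by simp
  also have "Teqv n \<dots> [T l, T k, T l, T l]" using cancelT[OF assms(1), of "[T l,T k,T l]" "[T l]"] by simp
  also have "Teqv n \<dots> [T l, T k]" using cancelT[OF assms(2), of "[T l,T k]" "[]"] by simp
  finally show ?thesis by (rule Teqv.sym)
qed

lemma anti: assumes "gk n k" "gk n l" "k + 2 \<le> l \<or> l + 2 \<le> k"
  shows "Teqv n [T k, T l] [Z, T l, T k]"
  using assms anti1 anti2 by blast

lemma braid3: assumes "gk n j" "gk n (Suc j)"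
  shows "Teqv n [T j, T (Suc j), T j] [T (Suc j), T j, T (Suc j)]"
proof -
  have b: "Teqv n [T j, T (Suc j), T j, T (Suc j), T j, T (Suc j)] []"
    by (rule rel_eqv, rule Trel.braid) (use assms in \<open>auto simp: gk_def\<close>)
  have 1: "Teqv n [T j, T (Suc j), T j, T (Suc j), T j, T (Suc j), T (Suc j), T j, T (Suc j)]
       [T j, T (Suc j), T j, T (Suc j), T j, T j, T (Suc j)]"
    using cancelT[OF assms(2), of "[T j, T (Suc j), T j, T (Suc j), T j]" "[T j, T (Suc j)]"] by simp
  have 2: "Teqv n [T j, T (Suc j), T j, T (Suc j), T j, T j, T (Suc j)]
       [T j, T (Suc j), T j, T (Suc j), T (Suc j)]"
    using cancelT[OF assms(1), of "[T j, T (Suc j), T j, T (Suc j)]" "[T (Suc j)]"] by simp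
  have 3: "Teqv n [T j, T (Suc j), T j, T (Suc j), T (Suc j)] [T j, T (Suc j), T j]"
    using cancelT[OF assms(2), of "[T j, T (Suc j), T j]" "[]"] by simp
  have "Teqv n [T j, T (Suc j), T j] ([T j, T (Suc j), T j, T (Suc j), T j, T (Suc j)] @ [T (Suc j), T j, T (Suc j)])"
    using Teqv.sym[OF Teqv.trans[OF 1 Teqv.trans[OF 2 3]]] by simp
  also have "Teqv n \<dots> ([] @ [T (Suc j), T j, T (Suc j)])"
    using Teqv_ctx[OF b, of "[]" "[T (Suc j), T j, T (Suc j)]"] by simp
  finally show ?thesis by simp
qed


definition cj :: "nat \<Rightarrow> gen list \<Rightarrow> gen list" where "cj k x = T k # x @ [T k]"

lemma cj_cong: "Teqv n x y \<Longrightarrow> Teqv n (cj k x) (cj k y)"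
  unfolding cj_def using Teqv_ctx[of n x y "[T k]" "[T k]"] by simp

lemma cj_app: "gk n k \<Longrightarrow> Teqv n (cj k (x @ y)) (cj k x @ cj k y)"
  unfolding cj_def using Teqv.sym[OF cancelT[of n k "T k # x" "y @ [T k]"]] by simp

lemma cj_Z: "gk n k \<Longrightarrow> Teqv n (cj k (x @ [Z])) (cj k x @ [Z])"
  unfolding cj_def using zT_comm[of n k "T k # x" "[]"] by simp

lemma cj_cj: "gk n k \<Longrightarrow> Teqv n (cj k (cj k x)) x"
proof -
  assume k: "gk n k"
  have "Teqv n (cj k (cj k x)) ([] @ [T k, T k] @ x @ [T k, T k])" by (simp add: cj_def Teqv.refl)
  also have "Teqv n \<dots> (x @ [T k, T k] @ [])" using cancelT[OF k, of "[]" "x @ [T k, T k]"] by simp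
  also have "Teqv n \<dots> x" using cancelT[OF k, of x "[]"] by simp
  finally show ?thesis .
qed

lemma set_gens_T: "gk n k \<Longrightarrow> T k \<in> gens n" by (simp add: gens_iff)

lemma cj_anti: assumes k: "gk n k" and i: "gk n i" and f: "k + 2 \<le> i \<or> i + 2 \<le> k"
  and x: "set x \<subseteq> gens n"
  shows "Teqv n (cj k (cj i x)) (cj i (cj k x))"
proof -
  have "cj k (cj i x) = [] @ [T k, T i] @ x @ [T i, T k]" by (simp add: cj_def)
  also have "Teqv n \<dots> ([] @ [Z, T i, T k] @ x @ [T i, T k])" by (rule Teqv_ctx, rule anti[OF k i f])
  also have "\<dots> = (Z # [T i, T k] @ x) @ [T i, T k] @ []" by simp
  also have "Teqv n \<dots> ((Z # [T i, T k] @ x) @ [Z, T k, T i] @ [])"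
    by (rule Teqv_ctx, rule anti[OF i k]) (use f in auto)
  also have "\<dots> = [] @ Z # ([T i, T k] @ x) @ (Z # [T k, T i])" by simp
  also have "Teqv n \<dots> ([] @ ([T i, T k] @ x) @ Z # (Z # [T k, T i]))"
    by (rule zcomm) (use x set_gens_T[OF i] set_gens_T[OF k] in auto)
  also have "\<dots> = ([T i, T k] @ x) @ Z # Z # [T k, T i]" by simp
  also have "Teqv n \<dots> (([T i, T k] @ x) @ [T k, T i])" by (rule cancelZ')
  also have "\<dots> = cj i (cj k x)" by (simp add: cj_def)
  finally show ?thesis .
qed

lemma cj_braid: assumes i: "gk n i" and i1: "gk n (Suc i)"
  shows "Teqv n (cj (Suc i) (cj i x)) (cj i (cj (Suc i) (cj i (cj (Suc i) x))))"
proof -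
  have L: "Teqv n [T (Suc i), T i] [T i, T (Suc i), T i, T (Suc i)]"
  proof -
    have "Teqv n [T i, T (Suc i), T i, T (Suc i)] ([] @ [T (Suc i), T i, T (Suc i)] @ [T (Suc i)])"
      using Teqv_ctx[OF braid3[OF i i1], of "[]" "[T (Suc i)]"] by simp
    also have "Teqv n \<dots> [T (Suc i), T i]" using cancelT[OF i1, of "[T (Suc i), T i]" "[]"] by simp
    finally show ?thesis by (rule Teqv.sym)
  qed
  have R: "Teqv n [T i, T (Suc i)] [T (Suc i), T i, T (Suc i), T i]"
  proof -
    have "Teqv n [T (Suc i), T i, T (Suc i), T i] ([T (Suc i)] @ [T (Suc i), T i, T (Suc i)] @ [])"
      using Teqv_ctx[OF braid3[OF i i1], of "[T (Suc i)]" "[]"] by simp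
    also have "Teqv n \<dots> [T i, T (Suc i)]" using cancelT[OF i1, of "[]" "[T i, T (Suc i)]"] by simp
    finally show ?thesis by (rule Teqv.sym)
  qed
  have "cj (Suc i) (cj i x) = [] @ [T (Suc i), T i] @ (x @ [T i, T (Suc i)])" by (simp add: cj_def)
  also have "Teqv n \<dots> ([] @ [T i, T (Suc i), T i, T (Suc i)] @ (x @ [T i, T (Suc i)]))"
    by (rule Teqv_ctx[OF L])
  also have "\<dots> = ([T i, T (Suc i), T i, T (Suc i)] @ x) @ [T i, T (Suc i)] @ []" by simp
  also have "Teqv n \<dots> (([T i, T (Suc i), T i, T (Suc i)] @ x) @ [T (Suc i), T i, T (Suc i), T i] @ [])"
    by (rule Teqv_ctx[OF R])
  also have "\<dots> = cj i (cj (Suc i) (cj i (cj (Suc i) x)))" by (simp add: cj_def)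
  finally show ?thesis .
qed


fun bw :: "nat \<Rightarrow> nat \<Rightarrow> gen list" where
  "bw i 0 = [T i]"
| "bw i (Suc d) = T i # bw (Suc i) d @ [T i, Z]"

lemma bw_Suc_cj: "bw i (Suc d) = cj i (bw (Suc i) d) @ [Z]"
  by (simp add: cj_def)

lemma bw_gens: "1 \<le> i \<Longrightarrow> i + d + 1 \<le> n \<Longrightarrow> set (bw i d) \<subseteq> gens n"
  by (induction d arbitrary: i) (auto simp: gens_iff gk_def)

definition brw :: "nat \<Rightarrow> nat \<Rightarrow> gen list" where
  "brw a b = (if a < b then bw a (b - a - 1) else bw b (a - b - 1) @ [Z])"

lemma brw_lt: "a < b \<Longrightarrow> brw a b = bw a (b - a - 1)" by (simp add: brw_def)
lemma brw_gt: "b < a \<Longrightarrow> brw a b = bw b (a - b - 1) @ [Z]" by (simp add: brw_def)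

lemma sp: "s_perm k x = (if x = k then Suc k else if x = Suc k then k else x)"
  by (simp add: s_perm_def transpose_def)

lemma claim:
  "\<And>i k. gk n k \<Longrightarrow> 1 \<le> i \<Longrightarrow> i + d + 1 \<le> n \<Longrightarrow>
    Teqv n (cj k (bw i d)) (brw (s_perm k i) (s_perm k (i + d + 1)) @ [Z])"
proof (induction d rule: less_induct)
  case (less d i k)
  have gi: "gk n i" using less.prems by (simp add: gk_def)
  have gkk: "gk n k" using less.prems by simp
  show ?case
  proof (cases d)
    case 0
    note d = this
    consider "k = i" | "Suc k = i" | "k = Suc i" | "k + 2 \<le> i \<or> i + 2 \<le> k" by linarith
    then show ?thesis
    proof cases
      case 1
      have "cj k (bw i d) = [] @ [T i, T i] @ [T i]" using 1 d by (simp add: cj_def)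
      also have "Teqv n \<dots> ([T i] @ [])" using cancelT[OF gi, of "[]" "[T i]"] by simp
      also have "Teqv n \<dots> ([T i] @ [Z, Z] @ [])" by (rule Teqv.sym, rule cancelZ)
      also have "\<dots> = brw (s_perm k i) (s_perm k (i + d + 1)) @ [Z]"
        using 1 d by (simp add: sp brw_def)
      finally show ?thesis .
    next
      case 2
      have "cj k (bw i d) = [T k, T i, T k] @ []" using 2 d by (simp add: cj_def)
      also have "Teqv n \<dots> ([T k, T i, T k] @ [Z, Z] @ [])" by (rule Teqv.sym, rule cancelZ)
      also have "\<dots> = brw (s_perm k i) (s_perm k (i + d + 1)) @ [Z]"
        using 2 d by (simp add: sp brw_def)
      finally show ?thesis .
    next
      case 3
      have "cj k (bw i d) = [T (Suc i), T i, T (Suc i)]" using 3 d by (simp add: cj_def)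
      also have "Teqv n \<dots> [T i, T (Suc i), T i]" by (rule Teqv.sym, rule braid3[OF gi]) (use gkk 3 in simp)
      also have "\<dots> = [T i, T (Suc i), T i] @ []" by simp
      also have "Teqv n \<dots> ([T i, T (Suc i), T i] @ [Z, Z] @ [])" by (rule Teqv.sym, rule cancelZ)
      also have "\<dots> = brw (s_perm k i) (s_perm k (i + d + 1)) @ [Z]"
        using 3 d by (simp add: sp brw_def)
      finally show ?thesis .
    next
      case 4
      have "cj k (bw i d) = [] @ [T k, T i] @ [T k]" using d by (simp add: cj_def)
      also have "Teqv n \<dots> ([] @ [Z, T i, T k] @ [T k])" by (rule Teqv_ctx, rule anti[OF gkk gi 4])
      also have "Teqv n \<dots> ([Z, T i] @ [])" using cancelT[OF gkk, of "[Z, T i]" "[]"] by simp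
      also have "Teqv n \<dots> ([] @ [T i] @ Z # [])" using zcomm[of "[T i]" n "[]" "[]"] gi by (simp add: gens_iff)
      also have "\<dots> = brw (s_perm k i) (s_perm k (i + d + 1)) @ [Z]"
        using 4 d by (auto simp add: sp brw_def)
      finally show ?thesis .
    qed
  next
    case (Suc e)
    note d = this
    define X where "X = bw (Suc i) e"
    have Xg: "set X \<subseteq> gens n" unfolding X_def by (rule bw_gens) (use less.prems d in auto)
    have bwi: "bw i d = cj i X @ [Z]" by (simp add: d X_def cj_def)
    have step1: "Teqv n (cj k (bw i d)) (cj k (cj i X) @ [Z])" unfolding bwi by (rule cj_Z[OF gkk])
    consider "k = i" | "Suc k = i" | "k = Suc i" | "k + 2 \<le> i \<or> i + 2 \<le> k" by linarith
    then show ?thesis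
    proof cases
      case 1
      have "Teqv n (cj k (bw i d)) (cj k (cj i X) @ [Z])" by (rule step1)
      also have "Teqv n \<dots> (X @ [Z])" using Teqv_app_right[OF cj_cj[OF gi, of X], of "[Z]"] 1 by simp
      also have "\<dots> = brw (s_perm k i) (s_perm k (i + d + 1)) @ [Z]"
        using 1 d by (simp add: sp brw_def X_def)
      finally show ?thesis .
    next
      case 2
      have "cj k (bw i d) = cj k (bw i d) @ []" by simp
      also have "Teqv n \<dots> (cj k (bw i d) @ [Z, Z] @ [])" by (rule Teqv.sym, rule cancelZ)
      also have "\<dots> = brw (s_perm k i) (s_perm k (i + d + 1)) @ [Z]"
        using 2 d by (simp add: sp brw_def cj_def)
      finally show ?thesis .
    next
      case 3
      have gi1: "gk n (Suc i)" using 3 gkk by simp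
      show ?thesis
      proof (cases e)
        case 0
        have "Teqv n (cj k (bw i d)) (cj k (cj i X) @ [Z])" by (rule step1)
        also have "cj k (cj i X) @ [Z] = [] @ [T (Suc i), T i, T (Suc i)] @ [T i, T (Suc i), Z]"
          using 3 0 by (simp add: cj_def X_def)
        also have "Teqv n \<dots> ([] @ [T i, T (Suc i), T i] @ [T i, T (Suc i), Z])"
          by (rule Teqv_ctx, rule Teqv.sym, rule braid3[OF gi gi1])
        also have "Teqv n \<dots> ([T i, T (Suc i)] @ T (Suc i) # Z # [])"
          using cancelT[OF gi, of "[T i, T (Suc i)]" "[T (Suc i), Z]"] by simp
        also have "Teqv n \<dots> ([T i] @ [Z])"
          using cancelT[OF gi1, of "[T i]" "[Z]"] by simp
        also have "\<dots> = brw (s_perm k i) (s_perm k (i + d + 1)) @ [Z]"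
          using 3 d 0 by (simp add: sp brw_def)
        finally show ?thesis .
      next
        case (Suc f)
        define Y where "Y = bw (Suc (Suc i)) f"
        have IH1: "Teqv n (cj (Suc i) X) (Y @ [Z])"
          using less.IH[of e "Suc i" "Suc i"] less.prems gi1 d Suc
          by (simp add: X_def Y_def sp brw_def)
        have IH2: "Teqv n (cj i Y) (Y @ [Z])"
          using less.IH[of f i "Suc (Suc i)"] less.prems gi d Suc
          by (simp add: Y_def sp brw_def)
        have IH3: "Teqv n (cj (Suc i) Y) (X @ [Z])"
          using less.IH[of f "Suc i" "Suc (Suc i)"] less.prems gi1 d Suc
          by (simp add: X_def Y_def sp brw_def)
        have "Teqv n (cj k (bw i d)) (cj k (cj i X) @ [Z])" by (rule step1)
        also have "Teqv n \<dots> (cj i (cj (Suc i) (cj i (cj (Suc i) X))) @ [Z])"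
          unfolding 3 by (rule Teqv_app_right, rule cj_braid[OF gi gi1])
        also have "Teqv n \<dots> (cj i (cj (Suc i) (cj i (Y @ [Z]))) @ [Z])"
          by (intro Teqv_app_right cj_cong IH1)
        also have "Teqv n \<dots> (cj i (cj (Suc i) (cj i Y @ [Z])) @ [Z])"
          by (intro Teqv_app_right cj_cong cj_Z gi)
        also have "Teqv n \<dots> (cj i (cj (Suc i) ((Y @ [Z]) @ [Z])) @ [Z])"
          by (intro Teqv_app_right cj_cong IH2)
        also have "Teqv n \<dots> (cj i (cj (Suc i) Y) @ [Z])"
          by (intro Teqv_app_right cj_cong) (use cancelZ[of n Y "[]"] in simp)
        also have "Teqv n \<dots> (cj i (X @ [Z]) @ [Z])"
          by (intro Teqv_app_right cj_cong IH3)
        also have "Teqv n \<dots> ((cj i X @ [Z]) @ [Z])"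
          by (intro Teqv_app_right cj_Z gi)
        also have "\<dots> = brw (s_perm k i) (s_perm k (i + d + 1)) @ [Z]"
          using 3 d Suc by (simp add: sp brw_def X_def cj_def)
        finally show ?thesis .
      qed
    next
      case 4
      define j' where "j' = s_perm k (i + d + 1)"
      have IH: "Teqv n (cj k X) (brw (s_perm k (Suc i)) j' @ [Z])"
        using less.IH[of e k "Suc i"] less.prems d by (simp add: X_def j'_def)
      have "Teqv n (cj k (bw i d)) (cj k (cj i X) @ [Z])" by (rule step1)
      also have "Teqv n \<dots> (cj i (cj k X) @ [Z])"
        by (intro Teqv_app_right cj_anti gkk gi 4 Xg)
      also have "Teqv n \<dots> (cj i (brw (s_perm k (Suc i)) j' @ [Z]) @ [Z])"
        by (intro Teqv_app_right cj_cong IH)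
      also have "Teqv n \<dots> ((cj i (brw (s_perm k (Suc i)) j') @ [Z]) @ [Z])"
        by (intro Teqv_app_right cj_Z gi)
      also have "\<dots> = brw (s_perm k i) (s_perm k (i + d + 1)) @ [Z]"
      proof (cases "k + 2 \<le> i")
        case True
        then show ?thesis using d by (simp add: sp brw_def X_def cj_def j'_def)
      next
        case False
        then have k: "i + 2 \<le> k" using 4 by simp
        have j': "i + 2 \<le> j'" unfolding j'_def using k d by (auto simp: sp)
        have e1: "s_perm k (Suc i) = Suc i" "s_perm k i = i" using k by (auto simp: sp)
        define m where "m = j' - i - 2"
        have m: "j' = i + m + 2" using j' by (simp add: m_def)
        show ?thesis unfolding j'_def[symmetric] e1 using m by (simp add: brw_def cj_def)
      qed
      finally show ?thesis .
    qed
  qed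
qed


lemma sp_range: "gk n k \<Longrightarrow> x \<in> {1..n} \<Longrightarrow> s_perm k x \<in> {1..n}"
  by (auto simp: sp gk_def)

lemma sp_inj: "s_perm k a = s_perm k b \<longleftrightarrow> a = b"
  by (auto simp: sp)

lemma brw_gens: "a \<in> {1..n} \<Longrightarrow> b \<in> {1..n} \<Longrightarrow> a \<noteq> b \<Longrightarrow> set (brw a b) \<subseteq> gens n"
proof (cases "a < b")
  case True
  assume "a \<in> {1..n}" "b \<in> {1..n}"
  then show ?thesis using True bw_gens[of a "b - a - 1" n] by (simp add: brw_def)
next
  case False
  assume "a \<in> {1..n}" "b \<in> {1..n}" "a \<noteq> b"
  then show ?thesis using False bw_gens[of b "a - b - 1" n] by (simp add: brw_def gens_iff)
qed

lemma brw_swap: "x \<noteq> y \<Longrightarrow> Teqv n (brw x y @ [Z]) (brw y x)"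
proof (cases "x < y")
  case True
  then show ?thesis by (simp add: brw_def Teqv.refl)
next
  case False
  assume "x \<noteq> y"
  with False have "y < x" by simp
  then have "brw x y @ [Z] = brw y x @ [Z, Z] @ []" by (simp add: brw_def)
  also have "Teqv n \<dots> (brw y x @ [])" by (rule cancelZ)
  finally show ?thesis by simp
qed

lemma claim2: assumes k: "gk n k" and a: "a \<in> {1..n}" and b: "b \<in> {1..n}" and ab: "a \<noteq> b"
  shows "Teqv n (cj k (brw a b)) (brw (s_perm k a) (s_perm k b) @ [Z])"
proof (cases "a < b")
  case True
  then show ?thesis using claim[OF k, of a "b - a - 1"] a b by (simp add: brw_def)
next
  case False
  then have ba: "b < a" using ab by simp
  have "cj k (brw a b) = cj k (bw b (a - b - 1) @ [Z])" using ba by (simp add: brw_def)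
  also have "Teqv n \<dots> (cj k (bw b (a - b - 1)) @ [Z])" by (rule cj_Z[OF k])
  also have "Teqv n \<dots> ((brw (s_perm k b) (s_perm k a) @ [Z]) @ [Z])"
    using claim[OF k, of b "a - b - 1"] a b ba by (intro Teqv_app_right) simp
  also have "Teqv n \<dots> (brw (s_perm k a) (s_perm k b) @ [Z])"
    by (rule Teqv_app_right, rule brw_swap) (use ab in \<open>simp add: sp_inj\<close>)
  finally show ?thesis .
qed

definition cntT :: "gen list \<Rightarrow> nat" where "cntT w = length (filter (\<lambda>g. g \<noteq> Z) w)"

lemma p_word_Cons: "p_word (g # w) = p_gen g \<circ> p_word w"
  by (simp add: p_word_def)

lemma p_word_range: "set w \<subseteq> gens n \<Longrightarrow> x \<in> {1..n} \<Longrightarrow> p_word w x \<in> {1..n}"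
proof (induction w)
  case Nil
  then show ?case by (simp add: p_word_def)
next
  case (Cons g w)
  then have "p_word w x \<in> {1..n}" by simp
  then show ?case using Cons.prems sp_range[of n _ "p_word w x"]
    by (auto simp: p_word_Cons p_gen_def gens_iff split: gen.splits)
qed

lemma p_word_inj: "p_word w a = p_word w b \<longleftrightarrow> a = b"
proof (induction w)
  case Nil
  then show ?case by (simp add: p_word_def)
next
  case (Cons g w)
  then show ?case by (auto simp: p_word_Cons p_gen_def sp_inj split: gen.splits)
qed

lemma word_conj:
  assumes "set w \<subseteq> gens n" and a: "a \<in> {1..n}" and b: "b \<in> {1..n}" and ab: "a \<noteq> b"
  shows "Teqv n (w @ brw a b @ rev w) (brw (p_word w a) (p_word w b) @ replicate (cntT w) Z)"
  using assms(1)
proof (induction w)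
  case Nil
  then show ?case by (simp add: p_word_def cntT_def Teqv.refl)
next
  case (Cons g w)
  define Y where "Y = brw (p_word w a) (p_word w b)"
  define R where "R = replicate (cntT w) Z"
  have Yg: "set Y \<subseteq> gens n" unfolding Y_def
    by (rule brw_gens) (use Cons.prems a b ab p_word_range p_word_inj in auto)
  have "(g # w) @ brw a b @ rev (g # w) = [g] @ (w @ brw a b @ rev w) @ [g]" by simp
  also have "Teqv n \<dots> ([g] @ (Y @ R) @ [g])"
    by (rule Teqv_ctx) (use Cons in \<open>simp add: Y_def R_def\<close>)
  also have "Teqv n \<dots> (brw (p_word (g # w) a) (p_word (g # w) b) @ replicate (cntT (g # w)) Z)"
  proof (cases g)
    case Z
    have "[g] @ (Y @ R) @ [g] = [] @ Z # Y @ (R @ [Z])" using Z by simp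
    also have "Teqv n \<dots> ([] @ Y @ Z # (R @ [Z]))" by (rule zcomm[OF Yg])
    also have "\<dots> = (Y @ R) @ [Z, Z] @ []" by (simp add: R_def replicate_app_Cons_same)
    also have "Teqv n \<dots> ((Y @ R) @ [])" by (rule cancelZ)
    also have "\<dots> = brw (p_word (g # w) a) (p_word (g # w) b) @ replicate (cntT (g # w)) Z"
      using Z by (simp add: Y_def R_def p_word_Cons p_gen_def cntT_def)
    finally show ?thesis .
  next
    case (T k)
    have k: "gk n k" using Cons.prems T by (simp add: gens_iff)
    have "[g] @ (Y @ R) @ [g] = (T k # Y) @ R @ [T k] @ []" using T by simp
    also have "Teqv n \<dots> ((T k # Y) @ [T k] @ R @ [])"
      unfolding R_def by (rule zcomm_rep) (use k in \<open>simp add: gens_iff\<close>)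
    also have "\<dots> = cj k Y @ R" by (simp add: cj_def)
    also have "Teqv n \<dots> ((brw (s_perm k (p_word w a)) (s_perm k (p_word w b)) @ [Z]) @ R)"
      unfolding Y_def
      by (rule Teqv_app_right, rule claim2[OF k]) (use Cons.prems a b ab p_word_range p_word_inj in auto)
    also have "\<dots> = brw (p_word (g # w) a) (p_word (g # w) b) @ replicate (cntT (g # w)) Z"
      using T by (simp add: R_def p_word_Cons p_gen_def cntT_def)
    finally show ?thesis .
  qed
  finally show ?case .
qed


lemma Tcls_eq: "Tcls n u = Tcls n v \<longleftrightarrow> Teqv n u v"
proof
  assume "Tcls n u = Tcls n v"
  then have "u \<in> Tcls n v" using Teqv.refl[of n u] by (auto simp: Tcls_def)
  then show "Teqv n u v" by (simp add: Tcls_def Teqv.sym)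
next
  assume "Teqv n u v"
  then show "Tcls n u = Tcls n v"
    by (auto simp: Tcls_def intro: Teqv.trans Teqv.sym)
qed

lemma some_cls: "Teqv n u (SOME a. a \<in> Tcls n u)"
proof -
  have "u \<in> Tcls n u" by (simp add: Tcls_def Teqv.refl)
  then have "(SOME a. a \<in> Tcls n u) \<in> Tcls n u" by (rule someI)
  then show ?thesis by (simp add: Tcls_def)
qed

lemma Teqv_app: "Teqv n u u' \<Longrightarrow> Teqv n v v' \<Longrightarrow> Teqv n (u @ v) (u' @ v')"
  using Teqv_app_right Teqv_app_left Teqv.trans by blast

lemma mult_cls: "Tcls n u \<otimes>\<^bsub>Tgrp n\<^esub> Tcls n v = Tcls n (u @ v)"
proof -
  have "Teqv n (u @ v) ((SOME a. a \<in> Tcls n u) @ (SOME b. b \<in> Tcls n v))"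
    by (intro Teqv_app some_cls)
  then show ?thesis by (simp add: Tgrp_def Tcls_eq Teqv.sym)
qed

lemma one_cls: "\<one>\<^bsub>Tgrp n\<^esub> = Tcls n []" by (simp add: Tgrp_def)

lemma carrier_Tgrp: "carrier (Tgrp n) = {Tcls n w | w. set w \<subseteq> gens n}"
  by (simp add: Tgrp_def)

lemma cls_in: "set w \<subseteq> gens n \<Longrightarrow> Tcls n w \<in> carrier (Tgrp n)"
  by (auto simp: carrier_Tgrp)

lemma rev_cancel: "set w \<subseteq> gens n \<Longrightarrow> Teqv n (rev w @ w) []"
proof (induction w)
  case Nil
  then show ?case by (simp add: Teqv.refl)
next
  case (Cons g w)
  have "rev (g # w) @ (g # w) = rev w @ [g, g] @ w" by simp
  also have "Teqv n \<dots> (rev w @ w)"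
    using Cons.prems cancelT[of n _ "rev w" w] cancelZ[of n "rev w" w]
    by (auto simp: gens_iff)
  also have "Teqv n \<dots> []" using Cons by simp
  finally show ?case .
qed

lemma group_T: "group (Tgrp n)"
proof (rule groupI)
  fix x y assume "x \<in> carrier (Tgrp n)" "y \<in> carrier (Tgrp n)"
  then obtain u v where "x = Tcls n u" "set u \<subseteq> gens n" "y = Tcls n v" "set v \<subseteq> gens n"
    by (auto simp: carrier_Tgrp)
  then show "x \<otimes>\<^bsub>Tgrp n\<^esub> y \<in> carrier (Tgrp n)"
    using cls_in[of "u @ v" n] by (simp add: mult_cls)
next
  show "\<one>\<^bsub>Tgrp n\<^esub> \<in> carrier (Tgrp n)" by (auto simp: one_cls carrier_Tgrp)
next
  fix x y z assume "x \<in> carrier (Tgrp n)" "y \<in> carrier (Tgrp n)" "z \<in> carrier (Tgrp n)"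
  then show "x \<otimes>\<^bsub>Tgrp n\<^esub> y \<otimes>\<^bsub>Tgrp n\<^esub> z = x \<otimes>\<^bsub>Tgrp n\<^esub> (y \<otimes>\<^bsub>Tgrp n\<^esub> z)"
    by (auto simp: carrier_Tgrp mult_cls)
next
  fix x assume "x \<in> carrier (Tgrp n)"
  then show "\<one>\<^bsub>Tgrp n\<^esub> \<otimes>\<^bsub>Tgrp n\<^esub> x = x"
    by (auto simp: carrier_Tgrp mult_cls one_cls)
next
  fix x assume "x \<in> carrier (Tgrp n)"
  then obtain w where w: "x = Tcls n w" "set w \<subseteq> gens n" by (auto simp: carrier_Tgrp)
  then have "Tcls n (rev w) \<in> carrier (Tgrp n)" using cls_in[of "rev w" n] by simp
  moreover have "Tcls n (rev w) \<otimes>\<^bsub>Tgrp n\<^esub> x = \<one>\<^bsub>Tgrp n\<^esub>"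
    using w rev_cancel[OF w(2)] by (simp add: mult_cls one_cls Tcls_eq)
  ultimately show "\<exists>y\<in>carrier (Tgrp n). y \<otimes>\<^bsub>Tgrp n\<^esub> x = \<one>\<^bsub>Tgrp n\<^esub>" by blast
qed

lemma inv_cls: "set w \<subseteq> gens n \<Longrightarrow> inv\<^bsub>Tgrp n\<^esub> (Tcls n w) = Tcls n (rev w)"
  by (rule group.inv_equality[OF group_T])
     (use cls_in[of "rev w" n] cls_in[of w n] in \<open>auto simp: mult_cls one_cls Tcls_eq rev_cancel\<close>)

lemma pow_z: "zT n [^]\<^bsub>Tgrp n\<^esub> l = Tcls n (replicate l Z)"
  by (induction l) (simp_all add: one_cls zT_def mult_cls replicate_append_same)

lemma p_word_app: "p_word (u @ v) = p_word u \<circ> p_word v"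
  by (induction u) (auto simp: p_word_def)

lemma p_rel: "Trel n u v \<Longrightarrow> p_word u = p_word v"
  by (induction rule: Trel.induct) (auto simp: p_word_def p_gen_def fun_eq_iff sp)

lemma p_eqv: "Teqv n u v \<Longrightarrow> p_word u = p_word v"
  by (induction rule: Teqv.induct) (auto simp: p_word_app dest: p_rel)

lemma pT_cls: "pT (Tcls n w) = p_word w"
  unfolding pT_def using p_eqv[OF some_cls[of n w]] by simp

lemma perm_p_gen: "permutation (p_gen g)"
  by (cases g) (simp_all add: p_gen_def s_perm_def permutation_swap_id)

lemma perm_p_word: "permutation (p_word w)"
proof (induction w)
  case Nil
  then show ?case by (simp add: p_word_def)
next
  case (Cons g w)
  then show ?case unfolding p_word_Cons by (rule permutation_compose[OF perm_p_gen])
qed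

lemma sign_p_gen: "sign (p_gen (T k)) = -1"
  by (simp add: p_gen_def s_perm_def sign_swap_id)

lemma sign_p_word: "sign (p_word w) = (-1) ^ cntT w"
proof (induction w)
  case Nil
  then show ?case by (simp add: p_word_def cntT_def)
next
  case (Cons g w)
  have "sign (p_word (g # w)) = sign (p_gen g) * sign (p_word w)"
    unfolding p_word_Cons by (rule sign_compose[OF perm_p_gen perm_p_word])
  then show ?case using Cons
    by (cases g) (simp_all add: cntT_def sign_p_gen, simp add: p_gen_def)
qed

lemma rep_mod2: "Teqv n (replicate c Z) (replicate (c mod 2) Z)"
proof (induction c rule: less_induct)
  case (less c)
  show ?case
  proof (cases "c < 2")
    case True
    then show ?thesis by (simp add: Teqv.refl)
  next
    case False
    then obtain m where m: "c = Suc (Suc m)" by (metis less_2_cases not_less_eq_eq not0_implies_Suc not_less not_less0 numeral_2_eq_2 Suc_le_D)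
    have "replicate c Z = [] @ [Z, Z] @ replicate m Z" using m by simp
    also have "Teqv n \<dots> ([] @ replicate m Z)" by (rule cancelZ)
    also have "Teqv n \<dots> (replicate (m mod 2) Z)" using less.IH[of m] m by simp
    finally show ?thesis using m by simp
  qed
qed

lemma act_lemma:
  assumes w0: "set w0 \<subseteq> gens n" and a: "a \<in> {1..n}" and b: "b \<in> {1..n}" and ab: "a \<noteq> b"
  shows "\<exists>c. act n (p_word w0) (Tcls n (brw a b))
     = Tcls n (brw (p_word w0 a) (p_word w0 b) @ replicate c Z) \<and> sign (p_word w0) = (-1) ^ c"
proof -
  define bb where "bb = (SOME b. b \<in> carrier (Tgrp n) \<and> pT b = p_word w0)"
  have "\<exists>b. b \<in> carrier (Tgrp n) \<and> pT b = p_word w0"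
    using cls_in[OF w0] pT_cls by blast
  then have bb: "bb \<in> carrier (Tgrp n) \<and> pT bb = p_word w0"
    unfolding bb_def by (rule someI_ex)
  then obtain w where w: "bb = Tcls n w" "set w \<subseteq> gens n" by (auto simp: carrier_Tgrp)
  have pw: "p_word w = p_word w0" using bb w pT_cls by metis
  have "act n (p_word w0) (Tcls n (brw a b)) = Tcls n ((w @ brw a b) @ rev w)"
    unfolding act_def Let_def bb_def[symmetric] using w by (simp add: mult_cls inv_cls)
  also have "\<dots> = Tcls n (brw (p_word w0 a) (p_word w0 b) @ replicate (cntT w) Z)"
    using word_conj[OF w(2) a b ab] pw by (simp add: Tcls_eq)
  finally show ?thesis using sign_p_word[of w] pw by metis
qed


lemma parity: "(-1::int) ^ c = (-1) ^ l \<Longrightarrow> c mod 2 = l mod 2"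
  by (cases "even c"; cases "even l") (auto simp: neg_one_even_power neg_one_odd_power
      even_iff_mod_2_eq_zero odd_iff_mod_2_eq_one)

lemma rep_par: "c mod 2 = l mod 2 \<Longrightarrow> Teqv n (replicate c Z) (replicate l Z)"
  using rep_mod2[of n c] rep_mod2[of n l] by (metis Teqv.sym Teqv.trans)

lemma p_word_single: "p_word [T i] = s_perm i"
  by (simp add: p_word_def p_gen_def)

lemma brk_cls: "1 \<le> i \<Longrightarrow> i + d + 1 \<le> n \<Longrightarrow> brk n i d = Tcls n (bw i d)"
proof (induction d arbitrary: i)
  case 0
  then show ?case by (simp add: tT_def)
next
  case (Suc d)
  have IH: "brk n (Suc i) d = Tcls n (brw (Suc i) (i + d + 2))"
    using Suc by (simp add: brw_lt)
  have g: "set [T i] \<subseteq> gens n" using Suc.prems by (simp add: gens_iff gk_def)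
  obtain c where c: "act n (p_word [T i]) (Tcls n (brw (Suc i) (i + d + 2)))
     = Tcls n (brw (p_word [T i] (Suc i)) (p_word [T i] (i + d + 2)) @ replicate c Z)"
    and sc: "sign (p_word [T i]) = (-1) ^ c"
    using act_lemma[OF g, of "Suc i" "i + d + 2"] Suc.prems by auto
  have cpar: "Suc c mod 2 = 0 mod 2"
    using parity[of c 1] sc sign_p_gen[of i] by (simp add: p_word_Cons p_word_def) presburger
  have e: "p_word [T i] (Suc i) = i" "p_word [T i] (i + d + 2) = i + d + 2"
    by (auto simp: p_word_single sp)
  have "brk n i (Suc d) = Tcls n (brw i (i + d + 2) @ replicate c Z @ [Z])"
    using IH c e by (simp add: p_word_single zT_def mult_cls)
  also have "\<dots> = Tcls n (bw i (Suc d) @ replicate (Suc c) Z)"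
    by (simp add: brw_lt replicate_append_same)
  also have "\<dots> = Tcls n (bw i (Suc d) @ replicate 0 Z)"
    unfolding Tcls_eq by (rule Teqv_app_left, rule rep_par[OF cpar])
  finally show ?case by simp
qed

lemma br_cls: "i \<in> {1..n} \<Longrightarrow> j \<in> {1..n} \<Longrightarrow> i \<noteq> j \<Longrightarrow> br n i j = Tcls n (brw i j)"
  by (cases "i < j") (auto simp: br_def brw_def brk_cls zT_def mult_cls)

lemma sword_p: "sword ks = p_word (map T ks)"
  by (induction ks) (simp_all add: sword_def p_word_def p_gen_def)

theorem proposition3p5:
  fixes n l :: nat and ks :: "nat list" and i j :: nat
  assumes "n \<ge> 4"
    and "length ks = l"
    and "\<forall>k \<in> set ks. 1 \<le> k \<and> k \<le> n - 1"
    and "i \<in> {1..n}" and "j \<in> {1..n}" and "i \<noteq> j"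
  shows "act n (sword ks) (br n i j)
         = br n (sword ks i) (sword ks j) \<otimes>\<^bsub>Tgrp n\<^esub> (zT n [^]\<^bsub>Tgrp n\<^esub> l)"
proof -
  define w where "w = map T ks"
  have wg: "set w \<subseteq> gens n" using assms(3) by (auto simp: w_def gens_iff gk_def)
  have cw: "cntT w = l" using assms(2) by (simp add: w_def cntT_def comp_def)
  obtain c where c: "act n (p_word w) (Tcls n (brw i j))
     = Tcls n (brw (p_word w i) (p_word w j) @ replicate c Z)"
    and sc: "sign (p_word w) = (-1) ^ c"
    using act_lemma[OF wg assms(4,5,6)] by auto
  have par: "c mod 2 = l mod 2" using parity[of c l] sc sign_p_word[of w] cw by simp
  have r: "p_word w i \<in> {1..n}" "p_word w j \<in> {1..n}" "p_word w i \<noteq> p_word w j"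
    using p_word_range[OF wg] p_word_inj[of w] assms(4,5,6) by auto
  have "act n (sword ks) (br n i j) = Tcls n (brw (p_word w i) (p_word w j) @ replicate c Z)"
    using c br_cls[OF assms(4,5,6)] by (simp add: sword_p w_def)
  also have "\<dots> = Tcls n (brw (p_word w i) (p_word w j) @ replicate l Z)"
    unfolding Tcls_eq by (rule Teqv_app_left, rule rep_par[OF par])
  also have "\<dots> = br n (sword ks i) (sword ks j) \<otimes>\<^bsub>Tgrp n\<^esub> (zT n [^]\<^bsub>Tgrp n\<^esub> l)"
    using br_cls[OF r] by (simp add: sword_p w_def pow_z mult_cls)
  finally show ?thesis .
qed

end
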